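(* Let $\Lambda$ be a finite set. Let $\mathcal{A}$ be a point based function array over a semigroup $A$ indexed by $\Lambda$, and let $\mathcal{S}$ be a function array over a partial semigroup $S$ indexed by $\Lambda$. Let $(f,g)\colon\mathcal{A}\to\gamma\mathcal{S}$ be a homomorphism. Then for each finite set $F\subseteq A$, each $D\in f(\bullet)$ and each coloring of $S$ with finitely many colors, there exists a basic sequence $(x_n)$ in $\mathcal{S}$ of elements of $D$ on which the coloring is $F$-$\mathcal{A}$-tame.
   Context: Partial semigroup: partial operation with $(rs)t$ defined iff $r(st)$ defined, then equal. A function array over $S$ indexed by non-empty $\Lambda$, based on a set $X$, assigns to each $\lambda$ a partial function $\lambda$ from $X$ to $S$ such that for all $s_0,\dots,s_k\in S$ some $x\in X$ has all $s_i\lambda(x)$ defined ($\lambda\in\Lambda$). Total: $S$ a semigroup, all $\lambda$ everywhere defined. Point based: $X=\{\bullet\}$. For $\mathcal{S}$ based on $X$: $\gamma S$ = ultrafilters $\mathcal{U}$ on $S$ with $\{t:st\text{ defined}\}\in\mathcal{U}$ for all $s$, a semigroup with $B\in\mathcal{U}*\mathcal{V}$ iff $\{s:\{t: st\text{ defined},\ st\in B\}\in\mathcal{V}\}\in\mathcal{U}$; $\gamma X$ = ultrafilters $\mathcal{U}$ on $X$ with $\{x: s\lambda(x)\text{ defined}\}\in\mathcal{U}$ for all $s,\lambda$; $B\in\lambda(\mathcal{U})$ iff $\lambda^{-1}(B)\in\mathcal{U}$; $\gamma\mathcal{S}$ = total function array over $\gamma S$ indexed by $\Lambda$ based on $\gamma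 X$. A homomorphism $(f,g)$ between total function arrays indexed by $\Lambda$ (over $A$ based on $X$, resp. over $B$ based on $Y$): $f\colon X\to Y$, $g\colon A\to B$ semigroup homomorphism, $\lambda(f(x))=g(\lambda(x))$. A sequence $(x_n)$ in $X$ is basic if $\lambda_0(x_{n_0})\cdots\lambda_l(x_{n_l})$ is defined for all $n_0<\cdots<n_l$, $\lambda_i\in\Lambda$. With $\vee$ the operation of $A$, a coloring of $S$ is $F$-$\mathcal{A}$-tame on $(x_n)$ if among products $\lambda_0(x_{n_0})\cdots\lambda_l(x_{n_l})$ ($n_0<\dots<n_l$) with $\lambda_k(\bullet)\vee\cdots\vee\lambda_l(\bullet)\in F$ for each $k\le l$, the color depends only on $\lambda_0(\bullet)\vee\cdots\vee\lambda_l(\bullet)$. *)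

theory Defs
  imports Main
begin

definition ultrafilter_on :: "'a set set \<Rightarrow> bool" where
  "ultrafilter_on U \<longleftrightarrow>
     UNIV \<in> U \<and> {} \<notin> U \<and>
     (\<forall>A B. A \<in> U \<and> A \<subseteq> B \<longrightarrow> B \<in> U) \<and>
     (\<forall>A B. A \<in> U \<and> B \<in> U \<longrightarrow> A \<inter> B \<in> U) \<and>
     (\<forall>A. A \<in> U \<or> - A \<in> U)"

text \<open>A partial operation is modelled as \<open>m :: 's \<Rightarrow> 's \<Rightarrow> 's option\<close>,
  \<open>m s t = None\<close> meaning that \<open>st\<close> is undefined. The carrier is the whole type.\<close>

definition partial_semigroup :: "('s \<Rightarrow> 's \<Rightarrow> 's option) \<Rightarrow> bool" where
  "partial_semigroup m \<longleftrightarrow>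
     (\<forall>r s t. Option.bind (m r s) (\<lambda>u. m u t) = Option.bind (m s t) (\<lambda>v. m r v))"

text \<open>Function array over \<open>S\<close> (with operation \<open>m\<close>) indexed by \<open>\<Lambda>\<close>, based on the
  set \<open>X\<close> (the whole type \<open>'x\<close>); \<open>lam l\<close> is the partial function belonging to \<open>l\<close>.\<close>

definition function_array ::
  "('s \<Rightarrow> 's \<Rightarrow> 's option) \<Rightarrow> 'i set \<Rightarrow> ('i \<Rightarrow> 'x \<Rightarrow> 's option) \<Rightarrow> bool" where
  "function_array m \<Lambda> lam \<longleftrightarrow> \<Lambda> \<noteq> {} \<and>
     (\<forall>T. finite T \<and> T \<noteq> {} \<longrightarrow>
        (\<exists>x. \<forall>s\<in>T. \<forall>l\<in>\<Lambda>. \<exists>y. lam l x = Some y \<and> m s y \<noteq> None))"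

definition gammaS :: "('s \<Rightarrow> 's \<Rightarrow> 's option) \<Rightarrow> 's set set set" where
  "gammaS m = {U. ultrafilter_on U \<and> (\<forall>s. {t. m s t \<noteq> None} \<in> U)}"

definition gamma_mult ::
  "('s \<Rightarrow> 's \<Rightarrow> 's option) \<Rightarrow> 's set set \<Rightarrow> 's set set \<Rightarrow> 's set set" where
  "gamma_mult m U V = {B. {s. {t. \<exists>u. m s t = Some u \<and> u \<in> B} \<in> V} \<in> U}"

definition gammaX ::
  "('s \<Rightarrow> 's \<Rightarrow> 's option) \<Rightarrow> 'i set \<Rightarrow> ('i \<Rightarrow> 'x \<Rightarrow> 's option) \<Rightarrow> 'x set set set" where
  "gammaX m \<Lambda> lam = {U. ultrafilter_on U \<and>
      (\<forall>s. \<forall>l\<in>\<Lambda>. {x. \<exists>y. lam l x = Some y \<and> m s y \<noteq> None} \<in> U)}"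

definition gamma_lam :: "('x \<Rightarrow> 's option) \<Rightarrow> 'x set set \<Rightarrow> 's set set" where
  "gamma_lam f U = {B. {x. \<exists>y. f x = Some y \<and> y \<in> B} \<in> U}"

fun pprod :: "('s \<Rightarrow> 's \<Rightarrow> 's option) \<Rightarrow> 's list \<Rightarrow> 's option" where
  "pprod m [] = None"
| "pprod m [s] = Some s"
| "pprod m (s # t # ts) = Option.bind (pprod m (t # ts)) (\<lambda>v. m s v)"

fun tprod :: "('a \<Rightarrow> 'a \<Rightarrow> 'a) \<Rightarrow> 'a list \<Rightarrow> 'a" where
  "tprod j [] = undefined"
| "tprod j [a] = a"
| "tprod j (a # b # bs) = j a (tprod j (b # bs))"

definition index_list :: "'i set \<Rightarrow> (nat \<times> 'i) list \<Rightarrow> bool" where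
  "index_list \<Lambda> ps \<longleftrightarrow> ps \<noteq> [] \<and> sorted_wrt (\<lambda>a b. fst a < fst b) ps \<and> snd ` set ps \<subseteq> \<Lambda>"

definition seq_prod ::
  "('s \<Rightarrow> 's \<Rightarrow> 's option) \<Rightarrow> ('i \<Rightarrow> 'x \<Rightarrow> 's option) \<Rightarrow> (nat \<Rightarrow> 'x) \<Rightarrow> (nat \<times> 'i) list \<Rightarrow> 's option" where
  "seq_prod m lam x ps =
     (if (\<forall>(n, l) \<in> set ps. lam l (x n) \<noteq> None)
      then pprod m (map (\<lambda>(n, l). the (lam l (x n))) ps) else None)"

definition basic_seq ::
  "('s \<Rightarrow> 's \<Rightarrow> 's option) \<Rightarrow> 'i set \<Rightarrow> ('i \<Rightarrow> 'x \<Rightarrow> 's option) \<Rightarrow> (nat \<Rightarrow> 'x) \<Rightarrow> bool" where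
  "basic_seq m \<Lambda> lam x \<longleftrightarrow> (\<forall>ps. index_list \<Lambda> ps \<longrightarrow> seq_prod m lam x ps \<noteq> None)"

definition label_prod :: "('a \<Rightarrow> 'a \<Rightarrow> 'a) \<Rightarrow> ('i \<Rightarrow> 'a) \<Rightarrow> (nat \<times> 'i) list \<Rightarrow> 'a" where
  "label_prod j lamA ps = tprod j (map (\<lambda>p. lamA (snd p)) ps)"

definition F_admissible ::
  "('a \<Rightarrow> 'a \<Rightarrow> 'a) \<Rightarrow> ('i \<Rightarrow> 'a) \<Rightarrow> 'a set \<Rightarrow> 'i set \<Rightarrow> (nat \<times> 'i) list \<Rightarrow> bool" where
  "F_admissible j lamA F \<Lambda> ps \<longleftrightarrow> index_list \<Lambda> ps \<and>
     (\<forall>k < length ps. label_prod j lamA (drop k ps) \<in> F)"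

definition tame ::
  "('s \<Rightarrow> 's \<Rightarrow> 's option) \<Rightarrow> 'i set \<Rightarrow> ('i \<Rightarrow> 'x \<Rightarrow> 's option) \<Rightarrow>
   ('a \<Rightarrow> 'a \<Rightarrow> 'a) \<Rightarrow> ('i \<Rightarrow> 'a) \<Rightarrow> 'a set \<Rightarrow> ('s \<Rightarrow> 'c) \<Rightarrow> (nat \<Rightarrow> 'x) \<Rightarrow> bool" where
  "tame m \<Lambda> lam j lamA F c x \<longleftrightarrow>
     (\<forall>ps qs u v. F_admissible j lamA F \<Lambda> ps \<and> F_admissible j lamA F \<Lambda> qs \<and>
        label_prod j lamA ps = label_prod j lamA qs \<and>
        seq_prod m lam x ps = Some u \<and> seq_prod m lam x qs = Some v \<longrightarrow> c u = c v)"

end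

theory Submission
  imports Defs
begin


lemma uf_up: "ultrafilter_on U \<Longrightarrow> A \<in> U \<Longrightarrow> A \<subseteq> B \<Longrightarrow> B \<in> U"
  unfolding ultrafilter_on_def by blast
lemma uf_int: "ultrafilter_on U \<Longrightarrow> A \<in> U \<Longrightarrow> B \<in> U \<Longrightarrow> A \<inter> B \<in> U"
  unfolding ultrafilter_on_def by blast
lemma uf_ne: "ultrafilter_on U \<Longrightarrow> A \<in> U \<Longrightarrow> \<exists>x. x \<in> A"
  unfolding ultrafilter_on_def by (metis ex_in_conv)
lemma uf_INT: "finite I \<Longrightarrow> ultrafilter_on U \<Longrightarrow> (\<forall>i\<in>I. A i \<in> U) \<Longrightarrow> (\<Inter>i\<in>I. A i) \<in> U"
proof (induction I rule: finite_induct)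
  case empty then show ?case unfolding ultrafilter_on_def by simp
next
  case (insert a I) then show ?case using uf_int[of U "A a" "\<Inter>i\<in>I. A i"] by simp
qed
lemma uf_color: assumes "ultrafilter_on U" "finite (range c)" shows "\<exists>k. c -` {k} \<in> U"
proof (rule ccontr)
  assume "\<not> ?thesis"
  then have "\<forall>k\<in>range c. - (c -` {k}) \<in> U" using assms(1) unfolding ultrafilter_on_def by metis
  then have "(\<Inter>k\<in>range c. - (c -` {k})) \<in> U" by (rule uf_INT[OF assms(2,1)])
  moreover have "(\<Inter>k\<in>range c. - (c -` {k})) = {}" by auto
  ultimately show False using assms(1) unfolding ultrafilter_on_def by simp
qed

lemma pprod_snoc: assumes "partial_semigroup m"
  shows "xs \<noteq> [] \<Longrightarrow> pprod m (xs @ [y]) = Option.bind (pprod m xs) (\<lambda>u. m u y)"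
proof (induction xs)
  case Nil then show ?case by simp
next
  case (Cons s xs)
  show ?case
  proof (cases xs)
    case Nil then show ?thesis by simp
  next
    case (Cons t ts)
    then have ih: "pprod m (t # ts @ [y]) = Option.bind (pprod m (t # ts)) (\<lambda>u. m u y)"
      using Cons.IH by simp
    show ?thesis
    proof (cases "pprod m (t # ts)")
      case None
      then show ?thesis using Cons ih by simp
    next
      case (Some w)
      have "Option.bind (m w y) (m s) = Option.bind (m s w) (\<lambda>u. m u y)"
        using assms unfolding partial_semigroup_def by metis
      then show ?thesis using Cons ih Some by simp
    qed
  qed
qed

lemma tprod_snoc: assumes "\<forall>a b d. j (j a b) d = j a (j b d)"
  shows "xs \<noteq> [] \<Longrightarrow> tprod j (xs @ [y]) = j (tprod j xs) y"
proof (induction xs)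
  case Nil then show ?case by simp
next
  case (Cons s xs)
  show ?case
  proof (cases xs)
    case Nil then show ?thesis by simp
  next
    case (Cons t ts)
    then have "tprod j (t # ts @ [y]) = j (tprod j (t # ts)) y" using Cons.IH by simp
    then show ?thesis using Cons assms by simp
  qed
qed

lemma sorted_wrt_fst_distinct: "sorted_wrt (\<lambda>a b. fst a < fst b) (ps :: (nat \<times> 'i) list) \<Longrightarrow> distinct ps"
proof (induction ps)
  case (Cons a ps)
  have "a \<notin> set ps"
  proof
    assume "a \<in> set ps"
    moreover have "\<forall>x\<in>set ps. fst a < fst x" using Cons.prems by simp
    ultimately have "fst a < fst a" by blast
    then show False by simp
  qed
  then show ?case using Cons by simp
qed simp



locale ctx =
  fixes \<Lambda> :: "'i set"
    and j :: "'a \<Rightarrow> 'a \<Rightarrow> 'a"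
    and lamA :: "'i \<Rightarrow> 'a"
    and m :: "'s \<Rightarrow> 's \<Rightarrow> 's option"
    and lam :: "'i \<Rightarrow> 'x \<Rightarrow> 's option"
    and p :: "'x set set"
    and g :: "'a \<Rightarrow> 's set set"
    and F :: "'a set"
    and D :: "'x set"
    and c :: "'s \<Rightarrow> 'c"
  assumes fin_Lambda: "finite \<Lambda>"
    and A_semigroup: "\<forall>a b d. j (j a b) d = j a (j b d)"
    and S_psg: "partial_semigroup m"
    and f_in: "p \<in> gammaX m \<Lambda> lam"
    and g_in: "\<forall>a. g a \<in> gammaS m"
    and g_hom: "\<forall>a b. g (j a b) = gamma_mult m (g a) (g b)"
    and fg_hom: "\<forall>l\<in>\<Lambda>. gamma_lam (lam l) p = g (lamA l)"
    and fin_F: "finite F"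
    and D_in: "D \<in> p"
    and fin_colors: "finite (range c)"
begin

lemma p_uf: "ultrafilter_on p" using f_in unfolding gammaX_def by simp
lemma g_uf: "ultrafilter_on (g e)" using g_in unfolding gammaS_def by simp

lemma gX: "l \<in> \<Lambda> \<Longrightarrow> {x. \<exists>y. lam l x = Some y \<and> m s y \<noteq> None} \<in> p"
  using f_in unfolding gammaX_def by simp

lemma glam: "l \<in> \<Lambda> \<Longrightarrow> B \<in> g (lamA l) \<Longrightarrow> {x. \<exists>y. lam l x = Some y \<and> y \<in> B} \<in> p"
  using fg_hom unfolding gamma_lam_def by auto

lemma gmult: "B \<in> g (j a b) \<Longrightarrow> {s. {t. \<exists>u. m s t = Some u \<and> u \<in> B} \<in> g b} \<in> g a"
  using g_hom unfolding gamma_mult_def by auto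

lemma assoc_m: "m u s = Some w \<Longrightarrow> m s t = Some w' \<Longrightarrow> m w t = m u w'"
proof -
  assume a: "m u s = Some w" "m s t = Some w'"
  have "Option.bind (m u s) (\<lambda>v. m v t) = Option.bind (m s t) (\<lambda>v. m u v)"
    using S_psg unfolding partial_semigroup_def by metis
  then show ?thesis using a by simp
qed

definition col where "col e = (SOME k. c -` {k} \<in> g e)"
definition C where "C e = c -` {col e}"

lemma C_in: "C e \<in> g e"
  unfolding C_def col_def using uf_color[OF g_uf fin_colors] by (rule someI_ex)

definition R where "R u e b = {t. \<exists>w. m u t = Some w \<and> w \<in> C (j e b)}"
definition P where "P n = {ps. index_list \<Lambda> ps \<and> (\<forall>q\<in>set ps. fst q < n)}"
abbreviation sp where "sp x ps \<equiv> seq_prod m lam x ps"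
abbreviation lab where "lab ps \<equiv> label_prod j lamA ps"
definition okb where "okb ps b \<longleftrightarrow> b \<in> F \<and> (\<forall>k<length ps. j (lab (drop k ps)) b \<in> F)"

definition Inv where "Inv x n \<longleftrightarrow> (\<forall>ps\<in>P n. \<exists>u. sp x ps = Some u \<and>
   (\<forall>b. okb ps b \<longrightarrow> R u (lab ps) b \<in> g b) \<and> (F_admissible j lamA F \<Lambda> ps \<longrightarrow> u \<in> C (lab ps)))"

definition Gs where "Gs l = {y. \<exists>s. lam l y = Some s \<and> s \<in> C (lamA l) \<and> (\<forall>b\<in>F. R s (lamA l) b \<in> g b)}"

definition Gp where "Gp x ps l = {y. \<exists>s w. lam l y = Some s \<and> m (the (sp x ps)) s = Some w \<and>
   (\<forall>b'\<in>F. okb ps (j (lamA l) b') \<longrightarrow> R w (j (lab ps) (lamA l)) b' \<in> g b') \<and>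
   (okb ps (lamA l) \<longrightarrow> w \<in> C (j (lab ps) (lamA l)))}"

definition G where "G x n = D \<inter> (\<Inter>l\<in>\<Lambda>. Gs l) \<inter> (\<Inter>(ps, l)\<in>P n \<times> \<Lambda>. Gp x ps l)"

lemma finite_P: "finite (P n)"
proof -
  let ?A = "{..<n} \<times> \<Lambda>"
  have "P n \<subseteq> {xs. set xs \<subseteq> ?A \<and> length xs \<le> card ?A}"
  proof
    fix ps assume "ps \<in> P n"
    then have i: "index_list \<Lambda> ps" and lt: "\<forall>q\<in>set ps. fst q < n" unfolding P_def by auto
    have s: "set ps \<subseteq> ?A" using i lt unfolding index_list_def by force
    have "distinct ps" using i sorted_wrt_fst_distinct unfolding index_list_def by blast
    then have "length ps = card (set ps)" by (simp add: distinct_card)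
    also have "\<dots> \<le> card ?A" by (rule card_mono) (use s fin_Lambda in auto)
    finally show "ps \<in> {xs. set xs \<subseteq> ?A \<and> length xs \<le> card ?A}" using s by simp
  qed
  moreover have "finite {xs. set xs \<subseteq> ?A \<and> length xs \<le> card ?A}"
    using fin_Lambda by (simp add: finite_lists_length_le)
  ultimately show ?thesis by (rule finite_subset)
qed

lemma Gs_in: assumes l: "l \<in> \<Lambda>" shows "Gs l \<in> p"
proof -
  have d: "{y. \<exists>s. lam l y = Some s \<and> s \<in> C (lamA l)} \<in> p" using glam[OF l C_in] .
  have "\<forall>b\<in>F. {y. \<exists>s. lam l y = Some s \<and> s \<in> {s. R s (lamA l) b \<in> g b}} \<in> p"
  proof
    fix b assume "b \<in> F"
    have "{s. {t. \<exists>u. m s t = Some u \<and> u \<in> C (j (lamA l) b)} \<in> g b} \<in> g (lamA l)"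
      using gmult[OF C_in] .
    then have "{s. R s (lamA l) b \<in> g b} \<in> g (lamA l)" unfolding R_def .
    then show "{y. \<exists>s. lam l y = Some s \<and> s \<in> {s. R s (lamA l) b \<in> g b}} \<in> p" using glam[OF l] by blast
  qed
  then have "(\<Inter>b\<in>F. {y. \<exists>s. lam l y = Some s \<and> s \<in> {s. R s (lamA l) b \<in> g b}}) \<in> p"
    by (rule uf_INT[OF fin_F p_uf])
  then have "{y. \<exists>s. lam l y = Some s \<and> s \<in> C (lamA l)} \<inter> (\<Inter>b\<in>F. {y. \<exists>s. lam l y = Some s \<and> s \<in> {s. R s (lamA l) b \<in> g b}}) \<in> p"
    using uf_int[OF p_uf d] by blast
  moreover have "{y. \<exists>s. lam l y = Some s \<and> s \<in> C (lamA l)} \<inter> (\<Inter>b\<in>F. {y. \<exists>s. lam l y = Some s \<and> s \<in> {s. R s (lamA l) b \<in> g b}}) \<subseteq> Gs l"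
    unfolding Gs_def by auto
  ultimately show ?thesis using uf_up[OF p_uf] by blast
qed

lemma Gp_in: assumes l: "l \<in> \<Lambda>" and u: "sp x ps = Some u"
  and inv: "\<forall>b. okb ps b \<longrightarrow> R u (lab ps) b \<in> g b"
  shows "Gp x ps l \<in> p"
proof -
  let ?a = "lab ps" and ?L = "lamA l"
  define Def where "Def = {y. \<exists>s. lam l y = Some s \<and> m u s \<noteq> None}"
  have Def_in: "Def \<in> p" unfolding Def_def using gX[OF l] .
  define T0 where "T0 = {y. \<exists>s. lam l y = Some s \<and> (okb ps ?L \<longrightarrow> s \<in> R u ?a ?L)}"
  have T0_in: "T0 \<in> p"
  proof (cases "okb ps ?L")
    case True
    then have "R u ?a ?L \<in> g ?L" using inv by blast
    then have "{y. \<exists>s. lam l y = Some s \<and> s \<in> R u ?a ?L} \<in> p" using glam[OF l] by blast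
    then show ?thesis unfolding T0_def using True by simp
  next
    case False
    have "Def \<subseteq> T0" unfolding Def_def T0_def using False by auto
    then show ?thesis using uf_up[OF p_uf Def_in] by blast
  qed
  define B where "B = {b'\<in>F. okb ps (j ?L b')}"
  define T where "T b' = {y. \<exists>s. lam l y = Some s \<and> s \<in> {s. {t. \<exists>w. m s t = Some w \<and> w \<in> R u ?a (j ?L b')} \<in> g b'}}" for b'
  have "\<forall>b'\<in>B. T b' \<in> p"
  proof
    fix b' assume "b' \<in> B"
    then have "R u ?a (j ?L b') \<in> g (j ?L b')" using inv unfolding B_def by blast
    then have "{s. {t. \<exists>w. m s t = Some w \<and> w \<in> R u ?a (j ?L b')} \<in> g b'} \<in> g ?L"
      by (rule gmult)
    then show "T b' \<in> p" unfolding T_def using glam[OF l] by blast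
  qed
  then have TB: "(\<Inter>b'\<in>B. T b') \<in> p"
    by (intro uf_INT[OF _ p_uf]) (simp_all add: B_def fin_F)
  have all: "Def \<inter> T0 \<inter> (\<Inter>b'\<in>B. T b') \<in> p"
    using uf_int[OF p_uf uf_int[OF p_uf Def_in T0_in] TB] .
  have "Def \<inter> T0 \<inter> (\<Inter>b'\<in>B. T b') \<subseteq> Gp x ps l"
  proof
    fix y assume y: "y \<in> Def \<inter> T0 \<inter> (\<Inter>b'\<in>B. T b')"
    then obtain s w where s: "lam l y = Some s" and w: "m u s = Some w"
      unfolding Def_def by auto
    have c1: "okb ps ?L \<longrightarrow> w \<in> C (j ?a ?L)"
      using y s w unfolding T0_def R_def by (auto simp: A_semigroup)
    have c2: "\<forall>b'\<in>F. okb ps (j ?L b') \<longrightarrow> R w (j ?a ?L) b' \<in> g b'"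
    proof (intro ballI impI)
      fix b' assume "b' \<in> F" "okb ps (j ?L b')"
      then have "b' \<in> B" unfolding B_def by simp
      then have "y \<in> T b'" using y by blast
      then have X: "{t. \<exists>w. m s t = Some w \<and> w \<in> R u ?a (j ?L b')} \<in> g b'"
        unfolding T_def using s by auto
      have "{t. \<exists>w. m s t = Some w \<and> w \<in> R u ?a (j ?L b')} \<subseteq> R w (j ?a ?L) b'"
      proof
        fix t assume "t \<in> {t. \<exists>w. m s t = Some w \<and> w \<in> R u ?a (j ?L b')}"
        then obtain w' z where w': "m s t = Some w'" and z: "m u w' = Some z" "z \<in> C (j ?a (j ?L b'))"
          unfolding R_def by auto
        have "m w t = Some z" using assoc_m[OF w w'] z by simp
        then show "t \<in> R w (j ?a ?L) b'" unfolding R_def using z A_semigroup by auto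
      qed
      then show "R w (j ?a ?L) b' \<in> g b'" using uf_up[OF g_uf X] by blast
    qed
    show "y \<in> Gp x ps l" unfolding Gp_def using s w u c1 c2 by auto
  qed
  then show ?thesis using uf_up[OF p_uf all] by blast
qed

lemma G_in: assumes "Inv x n" shows "G x n \<in> p"
proof -
  have a: "(\<Inter>l\<in>\<Lambda>. Gs l) \<in> p" by (intro uf_INT[OF fin_Lambda p_uf]) (simp add: Gs_in)
  have "\<forall>q\<in>P n \<times> \<Lambda>. (case q of (ps, l) \<Rightarrow> Gp x ps l) \<in> p"
  proof
    fix q assume "q \<in> P n \<times> \<Lambda>"
    then obtain ps l where q: "q = (ps, l)" "ps \<in> P n" "l \<in> \<Lambda>" by auto
    then obtain u where "sp x ps = Some u" "\<forall>b. okb ps b \<longrightarrow> R u (lab ps) b \<in> g b"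
      using assms unfolding Inv_def by blast
    then show "(case q of (ps, l) \<Rightarrow> Gp x ps l) \<in> p" using Gp_in q by simp
  qed
  then have b: "(\<Inter>(ps, l)\<in>P n \<times> \<Lambda>. Gp x ps l) \<in> p"
    by (intro uf_INT[OF _ p_uf]) (simp_all add: finite_P fin_Lambda)
  show ?thesis unfolding G_def using uf_int[OF p_uf uf_int[OF p_uf D_in a] b] .
qed

lemma sp_snoc: assumes "ps \<noteq> []" "lam l (x n) = Some s"
  shows "sp x (ps @ [(n,l)]) = Option.bind (sp x ps) (\<lambda>u. m u s)"
proof (cases "\<forall>(n, l) \<in> set ps. lam l (x n) \<noteq> None")
  case True
  have "map (\<lambda>(n, l). the (lam l (x n))) (ps @ [(n,l)]) = map (\<lambda>(n, l). the (lam l (x n))) ps @ [s]"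
    using assms by simp
  moreover have "map (\<lambda>(n, l). the (lam l (x n))) ps \<noteq> []" using assms by simp
  ultimately show ?thesis using True assms pprod_snoc[OF S_psg] unfolding seq_prod_def by simp
next
  case False
  then show ?thesis unfolding seq_prod_def by auto
qed

lemma sp_single: "lam l (x n) = Some s \<Longrightarrow> sp x [(n,l)] = Some s"
  unfolding seq_prod_def by simp

lemma lab_single: "lab [(n,l)] = lamA l" unfolding label_prod_def by simp

lemma lab_snoc: "ps \<noteq> [] \<Longrightarrow> lab (ps @ [(n,l)]) = j (lab ps) (lamA l)"
  unfolding label_prod_def using tprod_snoc[OF A_semigroup, of "map (\<lambda>p. lamA (snd p)) ps"] by simp

lemma sp_cong: "(\<forall>q\<in>set ps. x (fst q) = x' (fst q)) \<Longrightarrow> sp x ps = sp x' ps"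
proof -
  assume a: "\<forall>q\<in>set ps. x (fst q) = x' (fst q)"
  have mp: "map (\<lambda>(n, l). the (lam l (x n))) ps = map (\<lambda>(n, l). the (lam l (x' n))) ps"
    by (rule map_cong) (use a in auto)
  moreover have "(\<forall>q \<in> set ps. lam (snd q) (x (fst q)) \<noteq> None) = (\<forall>q \<in> set ps. lam (snd q) (x' (fst q)) \<noteq> None)"
    using a by auto
  then have cd: "(\<forall>(n, l) \<in> set ps. lam l (x n) \<noteq> None) = (\<forall>(n, l) \<in> set ps. lam l (x' n) \<noteq> None)"
    by (simp add: case_prod_beta)
  show ?thesis unfolding seq_prod_def by (simp only: mp cd)
qed

lemma lab_drop_snoc: assumes "k < length ps"
  shows "lab (drop k (ps @ [(n,l)])) = j (lab (drop k ps)) (lamA l)"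
proof -
  have "drop k (ps @ [(n,l)]) = drop k ps @ [(n,l)]" using assms by simp
  moreover have "drop k ps \<noteq> []" using assms by simp
  ultimately show ?thesis using lab_snoc by simp
qed

lemma okb_snoc: assumes "okb (ps @ [(n,l)]) b'"
  shows "b' \<in> F \<and> okb ps (j (lamA l) b')"
proof -
  have b': "b' \<in> F" using assms unfolding okb_def by simp
  have h: "\<forall>k<length (ps @ [(n,l)]). j (lab (drop k (ps @ [(n,l)]))) b' \<in> F" using assms unfolding okb_def by blast
  have eqd: "drop (length ps) (ps @ [(n,l)]) = [(n,l)]" by simp
  have "j (lab [(n,l)]) b' \<in> F" using h[rule_format, of "length ps"] eqd by simp
  then have jl: "j (lamA l) b' \<in> F" using lab_single by simp
  have "\<forall>k<length ps. j (lab (drop k ps)) (j (lamA l) b') \<in> F"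
  proof (intro allI impI)
    fix k assume k: "k < length ps"
    then have "j (lab (drop k (ps @ [(n,l)]))) b' \<in> F" using assms unfolding okb_def by simp
    then show "j (lab (drop k ps)) (j (lamA l) b') \<in> F" using lab_drop_snoc[OF k] A_semigroup by simp
  qed
  then show ?thesis using b' jl unfolding okb_def by simp
qed

lemma adm_snoc: assumes "F_admissible j lamA F \<Lambda> (ps @ [(n,l)])"
  shows "okb ps (lamA l)"
proof -
  have h: "\<forall>k<length (ps @ [(n,l)]). lab (drop k (ps @ [(n,l)])) \<in> F" using assms unfolding F_admissible_def by blast
  have eqd: "drop (length ps) (ps @ [(n,l)]) = [(n,l)]" by simp
  have "lab [(n,l)] \<in> F" using h[rule_format, of "length ps"] eqd by simp
  then have jl: "lamA l \<in> F" using lab_single by simp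
  have "\<forall>k<length ps. j (lab (drop k ps)) (lamA l) \<in> F"
  proof (intro allI impI)
    fix k assume k: "k < length ps"
    then have "lab (drop k (ps @ [(n,l)])) \<in> F" using assms unfolding F_admissible_def by simp
    then show "j (lab (drop k ps)) (lamA l) \<in> F" using lab_drop_snoc[OF k] by simp
  qed
  then show ?thesis using jl unfolding okb_def by simp
qed

lemma P_decomp: assumes "ps \<in> P (Suc n)" "\<not> (\<forall>q\<in>set ps. fst q < n)"
  shows "\<exists>ps0 l. ps = ps0 @ [(n,l)] \<and> l \<in> \<Lambda> \<and> (ps0 = [] \<or> ps0 \<in> P n)"
proof -
  have i: "index_list \<Lambda> ps" and lt: "\<forall>q\<in>set ps. fst q < Suc n" using assms(1) unfolding P_def by auto
  then have ne: "ps \<noteq> []" unfolding index_list_def by simp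
  define ps0 where "ps0 = butlast ps"
  obtain n' l where lst: "last ps = (n', l)" by (cases "last ps")
  have eq: "ps = ps0 @ [(n', l)]" using ne lst unfolding ps0_def by (metis append_butlast_last_id)
  have srt: "sorted_wrt (\<lambda>a b. fst a < fst b) (ps0 @ [(n', l)])" using i eq unfolding index_list_def by simp
  then have lt0: "\<forall>q\<in>set ps0. fst q < n'" by (simp add: sorted_wrt_append)
  have "n' < Suc n" using lt eq by simp
  obtain q where q: "q \<in> set ps" "\<not> fst q < n" using assms(2) by blast
  have "n' = n"
  proof (cases "q \<in> set ps0")
    case True then show ?thesis using lt0 q \<open>n' < Suc n\<close> by fastforce
  next
    case False then have "q = (n', l)" using q eq by simp
    then show ?thesis using q \<open>n' < Suc n\<close> by simp
  qed
  have l: "l \<in> \<Lambda>" using i eq unfolding index_list_def by auto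
  have "ps0 = [] \<or> ps0 \<in> P n"
  proof (cases "ps0 = []")
    case False
    have "sorted_wrt (\<lambda>a b. fst a < fst b) ps0" using srt by (simp add: sorted_wrt_append)
    moreover have "snd ` set ps0 \<subseteq> \<Lambda>" using i eq unfolding index_list_def by auto
    ultimately show ?thesis using False lt0 \<open>n' = n\<close> unfolding P_def index_list_def by simp
  qed simp
  then show ?thesis using eq l \<open>n' = n\<close> by blast
qed

lemma step: assumes inv: "Inv x n" and G: "x n \<in> G x n" shows "Inv x (Suc n)"
  unfolding Inv_def
proof
  fix ps assume ps: "ps \<in> P (Suc n)"
  show "\<exists>u. sp x ps = Some u \<and> (\<forall>b. okb ps b \<longrightarrow> R u (lab ps) b \<in> g b) \<and>
          (F_admissible j lamA F \<Lambda> ps \<longrightarrow> u \<in> C (lab ps))"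
  proof (cases "\<forall>q\<in>set ps. fst q < n")
    case True
    then have "ps \<in> P n" using ps unfolding P_def by simp
    then show ?thesis using inv unfolding Inv_def by blast
  next
    case False
    then obtain ps0 l where d: "ps = ps0 @ [(n,l)]" "l \<in> \<Lambda>" "ps0 = [] \<or> ps0 \<in> P n"
      using P_decomp[OF ps] by blast
    have "x n \<in> Gs l" using G d(2) unfolding G_def by blast
    then obtain s where s: "lam l (x n) = Some s" "s \<in> C (lamA l)" "\<forall>b\<in>F. R s (lamA l) b \<in> g b"
      unfolding Gs_def by blast
    show ?thesis
    proof (cases "ps0 = []")
      case True
      then have ps1: "ps = [(n,l)]" using d by simp
      have "\<forall>b. okb ps b \<longrightarrow> R s (lab ps) b \<in> g b"
        using s(3) unfolding ps1 lab_single okb_def by simp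
      have "sp x ps = Some s" using ps1 s(1) by (simp add: sp_single)
      then show ?thesis using \<open>\<forall>b. okb ps b \<longrightarrow> R s (lab ps) b \<in> g b\<close> ps1 lab_single s(2) by auto
    next
      case False
      then have p0: "ps0 \<in> P n" using d by simp
      then have ne: "ps0 \<noteq> []" unfolding P_def index_list_def by simp
      obtain u where u: "sp x ps0 = Some u" using inv p0 unfolding Inv_def by blast
      have "x n \<in> Gp x ps0 l" using G d(2) p0 unfolding G_def by blast
      then obtain s' w where gp: "lam l (x n) = Some s'" "m u s' = Some w"
        "\<forall>b'\<in>F. okb ps0 (j (lamA l) b') \<longrightarrow> R w (j (lab ps0) (lamA l)) b' \<in> g b'"
        "okb ps0 (lamA l) \<longrightarrow> w \<in> C (j (lab ps0) (lamA l))"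
        unfolding Gp_def using u by auto
      have spw: "sp x ps = Some w" using sp_snoc[where x=x and n=n and l=l and s=s' and ps=ps0, OF ne gp(1)] u gp(2) d(1) by simp
      have lb: "lab ps = j (lab ps0) (lamA l)" using lab_snoc[OF ne] d(1) by simp
      have "\<forall>b. okb ps b \<longrightarrow> R w (lab ps) b \<in> g b"
        using okb_snoc gp(3) lb d(1) by metis
      moreover have "F_admissible j lamA F \<Lambda> ps \<longrightarrow> w \<in> C (lab ps)"
        using adm_snoc gp(4) lb d(1) by metis
      ultimately show ?thesis using spw by blast
    qed
  qed
qed

lemma sp_cong_P: "ps \<in> P n \<Longrightarrow> (\<forall>i<n. x i = x' i) \<Longrightarrow> sp x ps = sp x' ps"
  by (rule sp_cong) (auto simp: P_def)

lemma Inv_cong: assumes "\<forall>i<n. x i = x' i" "Inv x n" shows "Inv x' n"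
  using assms(2) sp_cong_P[OF _ assms(1)] unfolding Inv_def by metis

lemma G_cong: assumes "\<forall>i<n. x i = x' i" shows "G x' n = G x n"
proof -
  have "\<And>q. q \<in> P n \<times> \<Lambda> \<Longrightarrow> (case q of (ps, l) \<Rightarrow> Gp x' ps l) = (case q of (ps, l) \<Rightarrow> Gp x ps l)"
  proof -
    fix q assume "q \<in> P n \<times> \<Lambda>"
    then obtain ps l where q: "q = (ps, l)" "ps \<in> P n" by auto
    then have "sp x ps = sp x' ps" using sp_cong_P assms by blast
    then show "(case q of (ps, l) \<Rightarrow> Gp x' ps l) = (case q of (ps, l) \<Rightarrow> Gp x ps l)"
      using q unfolding Gp_def by simp
  qed
  then have "(\<Inter>(ps, l)\<in>P n \<times> \<Lambda>. Gp x' ps l) = (\<Inter>(ps, l)\<in>P n \<times> \<Lambda>. Gp x ps l)"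
    by (rule INF_cong[OF refl])
  then show ?thesis unfolding G_def by simp
qed

primrec X :: "nat \<Rightarrow> nat \<Rightarrow> 'x" where
  "X 0 = (\<lambda>_. undefined)"
| "X (Suc n) = (X n)(n := (SOME y. y \<in> G (X n) n))"

lemma X_stable: "i < n \<Longrightarrow> X n i = X (Suc i) i"
proof (induction n)
  case 0 then show ?case by simp
next
  case (Suc n) then show ?case by (cases "i = n") auto
qed

lemma X_G: "Inv (X n) n \<Longrightarrow> X (Suc n) n \<in> G (X n) n"
proof -
  assume "Inv (X n) n"
  then have "G (X n) n \<in> p" by (rule G_in)
  then obtain y where "y \<in> G (X n) n" using uf_ne[OF p_uf] by blast
  then have "(SOME y. y \<in> G (X n) n) \<in> G (X n) n" by (rule someI)
  then show ?thesis by simp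
qed

lemma X_inv: "Inv (X n) n"
proof (induction n)
  case 0
  have "P 0 = {}" unfolding P_def index_list_def by (metis (mono_tags, lifting) empty_Collect_eq last_in_set less_nat_zero_code)
  then show ?case unfolding Inv_def by simp
next
  case (Suc n)
  have ag: "\<forall>i<n. X n i = X (Suc n) i" by simp
  have i: "Inv (X (Suc n)) n" using Inv_cong[OF ag Suc.IH] .
  have e1: "G (X (Suc n)) n = G (X n) n" by (rule G_cong[OF ag])
  have "X (Suc n) n \<in> G (X (Suc n)) n" by (subst e1) (rule X_G[OF Suc.IH])
  then show ?case by (rule step[OF i])
qed

definition xx where "xx i = X (Suc i) i"

lemma xx_inv: "Inv xx n"
proof -
  have "\<forall>i<n. X n i = xx i" unfolding xx_def using X_stable by simp
  then show ?thesis using Inv_cong X_inv by blast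
qed

lemma xx_D: "xx n \<in> D"
  using X_G[OF X_inv, of n] unfolding xx_def G_def by blast

lemma inP: assumes "index_list \<Lambda> ps" shows "ps \<in> P (Suc (Max (fst ` set ps)))"
proof -
  have "\<forall>q\<in>set ps. fst q < Suc (Max (fst ` set ps))"
    by (simp add: le_imp_less_Suc)
  then show ?thesis using assms unfolding P_def by simp
qed

lemma main: "\<exists>x. (\<forall>n. x n \<in> D) \<and> basic_seq m \<Lambda> lam x \<and> tame m \<Lambda> lam j lamA F c x"
proof (intro exI conjI allI)
  show "xx n \<in> D" for n by (rule xx_D)
  show "basic_seq m \<Lambda> lam xx" unfolding basic_seq_def
  proof (intro allI impI)
    fix ps assume "index_list \<Lambda> ps"
    then have "ps \<in> P (Suc (Max (fst ` set ps)))" by (rule inP)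
    then show "sp xx ps \<noteq> None" using xx_inv unfolding Inv_def by blast
  qed
  show "tame m \<Lambda> lam j lamA F c xx" unfolding tame_def
  proof (intro allI impI)
    fix ps qs u v
    assume a: "F_admissible j lamA F \<Lambda> ps \<and> F_admissible j lamA F \<Lambda> qs \<and> lab ps = lab qs \<and>
               sp xx ps = Some u \<and> sp xx qs = Some v"
    have "ps \<in> P (Suc (Max (fst ` set ps)))" using a inP unfolding F_admissible_def by blast
    then have "u \<in> C (lab ps)" using a xx_inv unfolding Inv_def by fastforce
    have "qs \<in> P (Suc (Max (fst ` set qs)))" using a inP unfolding F_admissible_def by blast
    then have "v \<in> C (lab qs)" using a xx_inv unfolding Inv_def by fastforce
    show "c u = c v" using \<open>u \<in> C (lab ps)\<close> \<open>v \<in> C (lab qs)\<close> a unfolding C_def by simp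
  qed
qed

end

theorem corollary3p4:
  fixes \<Lambda> :: "'i set"
    and j :: "'a \<Rightarrow> 'a \<Rightarrow> 'a"
    and lamA :: "'i \<Rightarrow> 'a"
    and m :: "'s \<Rightarrow> 's \<Rightarrow> 's option"
    and lam :: "'i \<Rightarrow> 'x \<Rightarrow> 's option"
    and p :: "'x set set"
    and g :: "'a \<Rightarrow> 's set set"
    and F :: "'a set"
    and D :: "'x set"
    and c :: "'s \<Rightarrow> 'c"
  assumes fin_Lambda: "finite \<Lambda>"
    and A_semigroup: "\<forall>a b d. j (j a b) d = j a (j b d)"
    and A_array: "\<Lambda> \<noteq> {}"
    and S_psg: "partial_semigroup m"
    and S_array: "function_array m \<Lambda> lam"
    and f_in: "p \<in> gammaX m \<Lambda> lam"
    and g_in: "\<forall>a. g a \<in> gammaS m"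
    and g_hom: "\<forall>a b. g (j a b) = gamma_mult m (g a) (g b)"
    and fg_hom: "\<forall>l\<in>\<Lambda>. gamma_lam (lam l) p = g (lamA l)"
    and fin_F: "finite F"
    and D_in: "D \<in> p"
    and fin_colors: "finite (range c)"
  shows "\<exists>x. (\<forall>n. x n \<in> D) \<and> basic_seq m \<Lambda> lam x \<and> tame m \<Lambda> lam j lamA F c x"
  proof -
  interpret ctx \<Lambda> j lamA m lam p g F D c
    by (unfold_locales; fact)
  show ?thesis by (rule main)
qed

end
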